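(* Let $K,\bar M\ge 1$ be integers, $\lambda>0$, $d>0$, $D>0$, and let $\xi_1,\dots,\xi_K$ be independent random variables, each uniformly distributed on $[0,D]$. Consider the array of $K\bar M$ sensors with positions $\zeta_{(k,m)}=\xi_k+(m-1)d$, $k=1,\dots,K$, $m=1,\dots,\bar M$. For an angle $\theta\in(-\pi/2,\pi/2)$ let $\bm g(\theta)\in\mathbb{C}^{K\bar M}$ have entries $\exp(\jmath\frac{2\pi}{\lambda}\zeta_{(k,m)}\sin\theta)$ (with $\jmath=\sqrt{-1}$). For fixed angles $\theta_i,\theta_j$ define $$\mathcal G_{i,j}=\frac{\bm g(\theta_j)^H\bm g(\theta_i)}{\|\bm g(\theta_i)\|_2\,\|\bm g(\theta_j)\|_2},$$ and set $\varphi_{i,j}=\frac{\pi d}{\lambda}(\sin\theta_i-\sin\theta_j)$, $\rho_{i,j}=\frac{\pi D}{\lambda}(\sin\theta_i-\sin\theta_j)$, $\mathcal M_{i,j}=\frac{\sin(\bar M\varphi_{i,j})}{\bar M\sin\varphi_{i,j}}$. Then $$\big|\mathbb{E}[\mathcal G_{i,j}]\big|=|\mathcal M_{i,j}|\cdot\left|\frac{\sin\rho_{i,j}}{\rho_{i,j}}\right|,\qquad \mathbb{E}\big[|\mathcal G_{i,j}|^2\big]=|\mathcal M_{i,j}|^2\left(\frac1K+\Big(1-\frac1K\Big)\left|\frac{\sin\rho_{i,j}}{\rho_{i,j}}\right|^2\right),$$ with $\sin(0)/0$ and $\frac{\sin(\bar M\varphi)}{\bar M\sin\varphi}$ at zeros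 of $\sin\varphi$ interpreted by their limiting values.
   Context: This describes a fully calibrated distributed array of $K$ identical uniform linear subarrays, each with $\bar M$ sensors at spacing $d$; $\xi_k$ is the position of the first sensor of the $k$-th subarray, $D$ the whole array aperture, $\lambda$ the wavelength; $\mathcal G_{i,j}$ is the angular correlation coefficient between steering vectors for directions $\theta_i$ and $\theta_j$. *)

theory Defs
  imports "HOL-Probability.Probability"
begin

definition sensor_idx :: "nat \<Rightarrow> nat \<Rightarrow> (nat \<times> nat) set" where
  "sensor_idx K Mb = {..<K} \<times> {..<Mb}"

text \<open>Position of sensor (k,m): xi_k + m*d (0-based m, i.e. (m-1)d in 1-based indexing).\<close>
definition sensor_pos :: "(nat \<Rightarrow> real) \<Rightarrow> real \<Rightarrow> nat \<times> nat \<Rightarrow> real" where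
  "sensor_pos xi d km = xi (fst km) + real (snd km) * d"

definition steering :: "real \<Rightarrow> real \<Rightarrow> (nat \<Rightarrow> real) \<Rightarrow> real \<Rightarrow> nat \<times> nat \<Rightarrow> complex" where
  "steering lam d xi \<theta> km = exp (\<i> * complex_of_real (2 * pi / lam * sensor_pos xi d km * sin \<theta>))"

definition steering_norm :: "nat \<Rightarrow> nat \<Rightarrow> real \<Rightarrow> real \<Rightarrow> (nat \<Rightarrow> real) \<Rightarrow> real \<Rightarrow> real" where
  "steering_norm K Mb lam d xi \<theta> = sqrt (\<Sum>km\<in>sensor_idx K Mb. (cmod (steering lam d xi \<theta> km))\<^sup>2)"

definition angular_corr :: "nat \<Rightarrow> nat \<Rightarrow> real \<Rightarrow> real \<Rightarrow> (nat \<Rightarrow> real) \<Rightarrow> real \<Rightarrow> real \<Rightarrow> complex" where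
  "angular_corr K Mb lam d xi \<theta>i \<theta>j =
     (\<Sum>km\<in>sensor_idx K Mb. cnj (steering lam d xi \<theta>j km) * steering lam d xi \<theta>i km)
     / complex_of_real (steering_norm K Mb lam d xi \<theta>i * steering_norm K Mb lam d xi \<theta>j)"

definition sinc_lim :: "real \<Rightarrow> real" where
  "sinc_lim x = (if x = 0 then 1 else sin x / x)"

text \<open>sin(Mb phi)/(Mb sin phi), with its limiting value cos(Mb phi)/cos phi
  (L'Hopital) at zeros of sin phi.\<close>
definition array_factor :: "nat \<Rightarrow> real \<Rightarrow> real" where
  "array_factor Mb \<phi> = (if sin \<phi> = 0 then cos (real Mb * \<phi>) / cos \<phi>
                          else sin (real Mb * \<phi>) / (real Mb * sin \<phi>))"

end

theory Submission
  imports Defs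
begin

lemma unif_int:
  fixes f :: "real \<Rightarrow> 'b::{banach,second_countable_topology}"
  assumes D: "D > 0" and f[measurable]: "f \<in> borel_measurable borel"
  shows "integral\<^sup>L (uniform_measure lborel {0..D}) f = (1/D) *\<^sub>R (LINT x:{0..D}|lborel. f x)"
proof -
  have "uniform_measure lborel {0..D} = density lborel (\<lambda>x. ennreal (indicator {0..D} x / D))"
    unfolding uniform_measure_def using D
  proof (intro density_cong)
    have "1 / ennreal D = ennreal (1/D)" using D by (metis divide_ennreal ennreal_1 zero_le_one)
    then show "AE x in lborel. indicator {0..D} x / emeasure lborel {0..D} = ennreal (indicator {0..D} x / D)"
      using D by (auto simp: indicator_def)
  qed auto
  then have "integral\<^sup>L (uniform_measure lborel {0..D}) f = integral\<^sup>L lborel (\<lambda>x. (indicator {0..D} x / D) *\<^sub>R f x)"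
    using D by (simp add: integral_density)
  also have "\<dots> = (1/D) *\<^sub>R (LINT x:{0..D}|lborel. f x)"
    unfolding set_lebesgue_integral_def by (simp add: integral_scaleR_right[symmetric] scaleR_scaleR)
  finally show ?thesis .
qed

lemma cmod_exp_minus1: "cmod (exp (\<i> * complex_of_real t) - 1) = 2 * \<bar>sin (t/2)\<bar>"
proof -
  have e: "exp (\<i> * complex_of_real t) - 1 = Complex (cos t - 1) (sin t)"
    by (simp add: exp_Euler complex_eq_iff cos_of_real sin_of_real)
  have "(cos t - 1)^2 + (sin t)^2 = 4 * (sin (t/2))^2"
  proof -
    have "cos t = 1 - 2 * (sin (t/2))^2" using cos_double_sin[of "t/2"] by simp
    then show ?thesis using sin_cos_squared_add[of t] by (simp add: power2_eq_square algebra_simps)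
  qed
  then have "cmod (Complex (cos t - 1) (sin t)) = sqrt ((2 * \<bar>sin (t/2)\<bar>)^2)"
    by (simp add: cmod_def power_mult_distrib)
  also have "\<dots> = 2 * \<bar>sin (t/2)\<bar>" by (simp only: real_sqrt_abs)
  finally show ?thesis using e by simp
qed

lemma deriv_test:
  assumes "u \<noteq> 0"
  shows "((\<lambda>x::real. exp (\<i> * complex_of_real (u*x)) / (\<i> * complex_of_real u)) has_vector_derivative
     exp (\<i> * complex_of_real (u*x))) (at x within S)"
proof -
  have "((\<lambda>z. exp (\<i> * (complex_of_real u * z)) / (\<i> * complex_of_real u)) has_field_derivative
     exp (\<i> * complex_of_real (u*x))) (at (of_real x))"
    using assms by (auto intro!: derivative_eq_intros simp: field_simps)
  from has_vector_derivative_real_field[OF this, of S] show ?thesis by simp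
qed
lemma unif_exp:
  assumes D: "D > 0"
  shows "cmod (integral\<^sup>L (uniform_measure lborel {0..D}) (\<lambda>x. exp (\<i> * complex_of_real (u*x))))
      = \<bar>sinc_lim (u*D/2)\<bar>"
proof (cases "u = 0")
  case True
  then show ?thesis using D by (simp add: unif_int sinc_lim_def)
next
  case False
  have "(LINT x:{0..D}|lborel. exp (\<i> * complex_of_real (u*x))) = (LBINT x=ereal 0..ereal D. exp (\<i> * complex_of_real (u*x)))"
    using D by (auto intro!: set_integral_discrete_difference[where X="{0, D}"]
           simp add: interval_lebesgue_integral_def einterval_iff)
  also have "\<dots> = exp (\<i> * complex_of_real (u*D)) / (\<i> * complex_of_real u) - exp (\<i> * complex_of_real (u*0)) / (\<i> * complex_of_real u)"
    apply (rule interval_integral_FTC_finite[where F="\<lambda>x. exp (\<i> * complex_of_real (u*x)) / (\<i> * complex_of_real u)"])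
     apply (auto intro!: continuous_intros)[1]
    by (rule deriv_test[OF False])
  also have "\<dots> = (exp (\<i> * complex_of_real (u*D)) - 1) / (\<i> * complex_of_real u)"
    by (simp add: diff_divide_distrib)
  finally have I: "(LINT x:{0..D}|lborel. exp (\<i> * complex_of_real (u*x))) = (exp (\<i> * complex_of_real (u*D)) - 1) / (\<i> * complex_of_real u)" .
  have "cmod (integral\<^sup>L (uniform_measure lborel {0..D}) (\<lambda>x. exp (\<i> * complex_of_real (u*x))))
      = (1/D) * (2 * \<bar>sin (u*D/2)\<bar> / \<bar>u\<bar>)"
    apply (subst unif_int[OF D])
     apply simp
    apply (subst I)
    using D by (simp only: norm_scaleR norm_divide cmod_exp_minus1 norm_mult norm_of_real) (simp add: field_simps)
  also have "\<dots> = \<bar>sinc_lim (u*D/2)\<bar>"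
    using D False by (simp add: sinc_lim_def abs_divide abs_mult field_simps)
  finally show ?thesis .
qed
lemma af_lemma:
  assumes Mb: "Mb \<ge> 1"
  shows "cmod (\<Sum>m<Mb. exp (\<i> * complex_of_real (u * (real m * d)))) / real Mb
     = \<bar>array_factor Mb (u*d/2)\<bar>"
proof -
  define \<phi> where "\<phi> = u*d/2"
  define z where "z = exp (\<i> * complex_of_real (2*\<phi>))"
  have zm: "exp (\<i> * complex_of_real (u * (real m * d))) = z ^ m" for m
  proof -
    have "\<i> * complex_of_real (u * (real m * d)) = of_nat m * (\<i> * complex_of_real (2*\<phi>))"
      by (simp add: \<phi>_def)
    then show ?thesis unfolding z_def by (simp only: exp_of_nat_mult)
  qed
  have S: "(\<Sum>m<Mb. exp (\<i> * complex_of_real (u * (real m * d)))) = (\<Sum>m<Mb. z ^ m)"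
    using zm by (intro sum.cong) auto
  have z1: "cmod (z - 1) = 2 * \<bar>sin \<phi>\<bar>" unfolding z_def cmod_exp_minus1 by simp
  have zM: "cmod (z ^ Mb - 1) = 2 * \<bar>sin (real Mb * \<phi>)\<bar>"
  proof -
    have "z ^ Mb = exp (\<i> * complex_of_real (2 * (real Mb * \<phi>)))"
      unfolding z_def exp_of_nat_mult[symmetric] by (simp add: algebra_simps)
    then show ?thesis by (simp only: cmod_exp_minus1) simp
  qed
  show ?thesis
  proof (cases "sin \<phi> = 0")
    case True
    then have "z = 1" using z1 by simp
    then have L: "cmod (\<Sum>m<Mb. exp (\<i> * complex_of_real (u * (real m * d)))) / real Mb = 1"
      using Mb by (simp only: S) simp
    obtain i :: int where i: "\<phi> = of_int i * pi" using True sin_zero_iff_int2 by blast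
    have "sin (real Mb * \<phi>) = 0"
      unfolding sin_zero_iff_int2 using i by (intro exI[of _ "int Mb * i"]) simp
    then have c1: "\<bar>cos (real Mb * \<phi>)\<bar> = 1"
      using sin_cos_squared_add[of "real Mb * \<phi>"] by (simp add: abs_square_eq_1)
    have c2: "\<bar>cos \<phi>\<bar> = 1"
      using sin_cos_squared_add[of "\<phi>"] True by (simp add: abs_square_eq_1)
    have R: "\<bar>array_factor Mb (u*d/2)\<bar> = 1" using True c1 c2 unfolding array_factor_def \<phi>_def[symmetric]
      by (simp add: abs_divide)
    show ?thesis using L R by linarith
  next
    case False
    then have "z \<noteq> 1" using z1 by auto
    then have "(\<Sum>m<Mb. z ^ m) = (z ^ Mb - 1) / (z - 1)" by (rule geometric_sum)
    then have "cmod (\<Sum>m<Mb. exp (\<i> * complex_of_real (u * (real m * d)))) / real Mb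
        = 2 * \<bar>sin (real Mb * \<phi>)\<bar> / (2 * \<bar>sin \<phi>\<bar>) / real Mb"
      by (simp only: S norm_divide zM z1)
    also have "\<dots> = \<bar>array_factor Mb (u*d/2)\<bar>"
      using False Mb unfolding array_factor_def \<phi>_def[symmetric] by (simp add: abs_divide abs_mult)
    finally show ?thesis .
  qed
qed
theorem proposition2:
  fixes M :: "'a measure" and \<xi> :: "nat \<Rightarrow> 'a \<Rightarrow> real"
    and K Mb :: nat and lam d D \<theta>i \<theta>j :: real
  assumes "prob_space M"
    and "K \<ge> 1" and "Mb \<ge> 1" and "lam > 0" and "d > 0" and "D > 0"
    and "prob_space.indep_vars M (\<lambda>_. borel) \<xi> {..<K}"
    and "\<And>k. k < K \<Longrightarrow> distr M lborel (\<xi> k) = uniform_measure lborel {0..D}"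
    and "\<theta>i \<in> {-pi/2<..<pi/2}" and "\<theta>j \<in> {-pi/2<..<pi/2}"
  shows "(cmod ((LINT \<omega>|M. angular_corr K Mb lam d (\<lambda>k. \<xi> k \<omega>) \<theta>i \<theta>j))
           = \<bar>array_factor Mb (pi * d / lam * (sin \<theta>i - sin \<theta>j))\<bar>
             * \<bar>sinc_lim (pi * D / lam * (sin \<theta>i - sin \<theta>j))\<bar>)
         \<and> ((LINT \<omega>|M. (cmod (angular_corr K Mb lam d (\<lambda>k. \<xi> k \<omega>) \<theta>i \<theta>j))\<^sup>2))
           = \<bar>array_factor Mb (pi * d / lam * (sin \<theta>i - sin \<theta>j))\<bar>\<^sup>2
             * (1 / real K + (1 - 1 / real K)
                * \<bar>sinc_lim (pi * D / lam * (sin \<theta>i - sin \<theta>j))\<bar>\<^sup>2)"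
proof -
  interpret prob_space M by fact
  note K1 = \<open>K \<ge> 1\<close> and Mb1 = \<open>Mb \<ge> 1\<close> and D0 = \<open>D > 0\<close>
  note indep = \<open>indep_vars (\<lambda>_. borel) \<xi> {..<K}\<close>
  note distr_eq = \<open>\<And>k. k < K \<Longrightarrow> distr M lborel (\<xi> k) = uniform_measure lborel {0..D}\<close>
  define u where "u = 2 * pi / lam * (sin \<theta>i - sin \<theta>j)"
  define Z where "Z k \<omega> = exp (\<i> * complex_of_real (u * \<xi> k \<omega>))" for k \<omega>
  define W where "W = (\<Sum>m<Mb. exp (\<i> * complex_of_real (u * (real m * d))))"
  define c0 where "c0 = integral\<^sup>L (uniform_measure lborel {0..D}) (\<lambda>x. exp (\<i> * complex_of_real (u*x)))"
  define T where "T \<omega> = (\<Sum>k<K. Z k \<omega>)" for \<omega>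
  have meas[measurable]: "\<xi> k \<in> borel_measurable M" if "k < K" for k
    using indep that unfolding indep_vars_def by auto
  have Zmeas[measurable]: "Z k \<in> borel_measurable M" if "k < K" for k
    unfolding Z_def using that by measurable
  have cZmeas[measurable]: "(\<lambda>\<omega>. cnj (Z k \<omega>)) \<in> borel_measurable M" if "k < K" for k
    by (rule borel_measurable_continuous_on[where f=cnj]) (auto intro!: continuous_intros Zmeas that)
  have Zn: "cmod (Z k \<omega>) = 1" for k \<omega> unfolding Z_def by simp
  have Zint: "integrable M (Z k)" if "k < K" for k
    by (rule integrable_const_bound[where B=1]) (use that Zn in auto)
  have EZ: "integral\<^sup>L M (Z k) = c0" if "k < K" for k
  proof -
    have "integral\<^sup>L M (Z k) = integral\<^sup>L (distr M lborel (\<xi> k)) (\<lambda>x. exp (\<i> * complex_of_real (u*x)))"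
      using that by (subst integral_distr) (auto simp: Z_def[abs_def])
    then show ?thesis using distr_eq[OF that] by (simp add: c0_def)
  qed
  have norms: "steering_norm K Mb lam d (\<lambda>k. \<xi> k \<omega>) \<theta> = sqrt (real (K * Mb))" for \<omega> \<theta>
    unfolding steering_norm_def steering_def sensor_idx_def by simp
  have term_eq: "cnj (steering lam d (\<lambda>k. \<xi> k \<omega>) \<theta>j (k, m)) * steering lam d (\<lambda>k. \<xi> k \<omega>) \<theta>i (k, m)
      = Z k \<omega> * exp (\<i> * complex_of_real (u * (real m * d)))" for \<omega> k m
  proof -
    define a where "a = 2 * pi / lam * (\<xi> k \<omega> + real m * d) * sin \<theta>j"
    define b where "b = 2 * pi / lam * (\<xi> k \<omega> + real m * d) * sin \<theta>i"
    have "cnj (steering lam d (\<lambda>k. \<xi> k \<omega>) \<theta>j (k, m)) * steering lam d (\<lambda>k. \<xi> k \<omega>) \<theta>i (k, m)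
        = exp (cnj (\<i> * complex_of_real a)) * exp (\<i> * complex_of_real b)"
      unfolding steering_def sensor_pos_def a_def b_def by (simp add: exp_cnj)
    also have "\<dots> = exp (\<i> * complex_of_real (u * \<xi> k \<omega>) + \<i> * complex_of_real (u * (real m * d)))"
    proof -
      have "b - a = u * \<xi> k \<omega> + u * (real m * d)"
        unfolding a_def b_def u_def using \<open>lam > 0\<close> by (simp add: field_simps)
      then have "cnj (\<i> * complex_of_real a) + \<i> * complex_of_real b
          = \<i> * complex_of_real (u * \<xi> k \<omega>) + \<i> * complex_of_real (u * (real m * d))"
        by (simp add: complex_eq_iff)
      then show ?thesis by (simp only: exp_add[symmetric])
    qed
    also have "\<dots> = Z k \<omega> * exp (\<i> * complex_of_real (u * (real m * d)))"
      unfolding Z_def by (simp only: exp_add)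
    finally show ?thesis .
  qed
  have G: "angular_corr K Mb lam d (\<lambda>k. \<xi> k \<omega>) \<theta>i \<theta>j = T \<omega> * W / of_nat (K * Mb)" for \<omega>
  proof -
    have "(\<Sum>km\<in>sensor_idx K Mb. cnj (steering lam d (\<lambda>k. \<xi> k \<omega>) \<theta>j km) * steering lam d (\<lambda>k. \<xi> k \<omega>) \<theta>i km)
        = (\<Sum>(k,m)\<in>{..<K} \<times> {..<Mb}. Z k \<omega> * exp (\<i> * complex_of_real (u * (real m * d))))"
      unfolding sensor_idx_def by (intro sum.cong) (auto simp: term_eq)
    also have "\<dots> = T \<omega> * W"
      unfolding T_def W_def sum_product sum.cartesian_product ..
    finally have N: "(\<Sum>km\<in>sensor_idx K Mb. cnj (steering lam d (\<lambda>k. \<xi> k \<omega>) \<theta>j km) * steering lam d (\<lambda>k. \<xi> k \<omega>) \<theta>i km) = T \<omega> * W" .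
    have "sqrt (real (K * Mb)) * sqrt (real (K * Mb)) = real (K * Mb)" by simp
    then show ?thesis unfolding angular_corr_def N norms by simp
  qed
  have phi: "pi * d / lam * (sin \<theta>i - sin \<theta>j) = u * d / 2" and rho: "pi * D / lam * (sin \<theta>i - sin \<theta>j) = u * D / 2"
    unfolding u_def using \<open>lam > 0\<close> by (simp_all add: field_simps)
  have AF: "cmod W / real Mb = \<bar>array_factor Mb (u*d/2)\<bar>" unfolding W_def by (rule af_lemma[OF Mb1])
  have C0: "cmod c0 = \<bar>sinc_lim (u*D/2)\<bar>" unfolding c0_def by (rule unif_exp[OF D0])
  have Tint: "integrable M T" unfolding T_def using Zint by auto
  have part1: "cmod (LINT \<omega>|M. angular_corr K Mb lam d (\<lambda>k. \<xi> k \<omega>) \<theta>i \<theta>j)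
      = \<bar>array_factor Mb (u*d/2)\<bar> * \<bar>sinc_lim (u*D/2)\<bar>"
  proof -
    have "(LINT \<omega>|M. angular_corr K Mb lam d (\<lambda>k. \<xi> k \<omega>) \<theta>i \<theta>j) = integral\<^sup>L M T * W / of_nat (K * Mb)"
      unfolding G by simp
    also have "integral\<^sup>L M T = of_nat K * c0"
      unfolding T_def using Zint EZ by (simp add: integral_sum)
    finally have "(LINT \<omega>|M. angular_corr K Mb lam d (\<lambda>k. \<xi> k \<omega>) \<theta>i \<theta>j) = of_nat K * c0 * W / of_nat (K * Mb)" .
    then have "cmod (LINT \<omega>|M. angular_corr K Mb lam d (\<lambda>k. \<xi> k \<omega>) \<theta>i \<theta>j) = cmod c0 * (cmod W / real Mb)"
      using K1 by (simp add: norm_mult norm_divide)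
    then show ?thesis using AF C0 by simp
  qed
  define c where "c = (cmod c0)\<^sup>2"
  have pair: "integral\<^sup>L M (\<lambda>\<omega>. Z k \<omega> * cnj (Z l \<omega>)) = (if k = l then 1 else complex_of_real c)"
    if kl: "k < K" "l < K" for k l
  proof (cases "k = l")
    case True
    have "Z k \<omega> * cnj (Z k \<omega>) = 1" for \<omega>
      using complex_norm_square[of "Z k \<omega>"] Zn[of k \<omega>] by simp
    then show ?thesis using True by (simp add: prob_space)
  next
    case False
    define Y where "Y i x = (if i = l then cnj (exp (\<i> * complex_of_real (u*x))) else exp (\<i> * complex_of_real (u*x)))" for i x
    have Ym: "Y i \<in> borel_measurable borel" for i unfolding Y_def by (cases "i = l") (auto intro!: borel_measurable_continuous_onI continuous_intros)
    have ind2: "indep_vars (\<lambda>_. borel) (\<lambda>i \<omega>. Y i (\<xi> i \<omega>)) {..<K}"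
      by (rule indep_vars_compose2[OF indep]) (use Ym in auto)
    then have ind3: "indep_vars (\<lambda>_. borel) (\<lambda>i \<omega>. Y i (\<xi> i \<omega>)) {k, l}"
      by (rule indep_vars_subset) (use kl in auto)
    have YZ: "Y k (\<xi> k \<omega>) = Z k \<omega>" "Y l (\<xi> l \<omega>) = cnj (Z l \<omega>)" for \<omega>
      using False unfolding Y_def Z_def by auto
    have Yint: "integrable M (\<lambda>\<omega>. Y i (\<xi> i \<omega>))" if "i \<in> {k, l}" for i
      using that Zint kl YZ by (auto simp: YZ)
    have "integral\<^sup>L M (\<lambda>\<omega>. \<Prod>i\<in>{k,l}. Y i (\<xi> i \<omega>)) = (\<Prod>i\<in>{k,l}. integral\<^sup>L M (\<lambda>\<omega>. Y i (\<xi> i \<omega>)))"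
      by (rule indep_vars_lebesgue_integral[OF _ ind3 Yint]) auto
    then have "integral\<^sup>L M (\<lambda>\<omega>. Z k \<omega> * cnj (Z l \<omega>)) = integral\<^sup>L M (Z k) * cnj (integral\<^sup>L M (Z l))"
      using False by (simp add: YZ)
    also have "\<dots> = complex_of_real c"
      using EZ kl unfolding c_def by (simp add: complex_norm_square[symmetric] del: of_real_power)
    finally show ?thesis using False by simp
  qed
  have T2: "complex_of_real ((cmod (T \<omega>))\<^sup>2) = (\<Sum>k<K. \<Sum>l<K. Z k \<omega> * cnj (Z l \<omega>))" for \<omega>
    unfolding complex_norm_square T_def cnj_sum sum_product ..
  have pint: "integrable M (\<lambda>\<omega>. Z k \<omega> * cnj (Z l \<omega>))" if "k < K" "l < K" for k l
    apply (rule integrable_const_bound[where B=1])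
     apply (simp add: norm_mult Zn)
    using that by measurable
  have ET2: "(LINT \<omega>|M. (cmod (T \<omega>))\<^sup>2) = real K * (real K * c + 1 - c)"
  proof -
    have "complex_of_real (LINT \<omega>|M. (cmod (T \<omega>))\<^sup>2) = (\<Sum>k<K. \<Sum>l<K. integral\<^sup>L M (\<lambda>\<omega>. Z k \<omega> * cnj (Z l \<omega>)))"
      unfolding integral_complex_of_real[symmetric] T2
      apply (subst Bochner_Integration.integral_sum)
       apply (rule Bochner_Integration.integrable_sum, rule pint; simp)
      apply (intro sum.cong refl)
      apply (subst Bochner_Integration.integral_sum)
       apply (rule pint; simp)
      by simp
    also have "\<dots> = (\<Sum>k<K. \<Sum>l<K. (if k = l then 1 else complex_of_real c))"
      using pair by (intro sum.cong) auto
    also have "\<dots> = (\<Sum>k<K. complex_of_real (real K * c + 1 - c))"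
    proof (intro sum.cong refl)
      fix k assume "k \<in> {..<K}"
      have "(\<Sum>l<K. (if k = l then 1 else complex_of_real c)) = (\<Sum>l<K. complex_of_real c + (if k = l then 1 - complex_of_real c else 0))"
        by (intro sum.cong) auto
      also have "\<dots> = of_nat K * complex_of_real c + (1 - complex_of_real c)"
        using \<open>k \<in> {..<K}\<close> by (simp add: sum.distrib)
      finally show "(\<Sum>l<K. (if k = l then 1 else complex_of_real c)) = complex_of_real (real K * c + 1 - c)" by simp
    qed
    also have "\<dots> = complex_of_real (real K * (real K * c + 1 - c))" by simp
    finally show ?thesis by (simp only: of_real_eq_iff)
  qed
  have part2: "(LINT \<omega>|M. (cmod (angular_corr K Mb lam d (\<lambda>k. \<xi> k \<omega>) \<theta>i \<theta>j))\<^sup>2)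
      = \<bar>array_factor Mb (u*d/2)\<bar>\<^sup>2 * (1 / real K + (1 - 1 / real K) * \<bar>sinc_lim (u*D/2)\<bar>\<^sup>2)"
  proof -
    have "(LINT \<omega>|M. (cmod (angular_corr K Mb lam d (\<lambda>k. \<xi> k \<omega>) \<theta>i \<theta>j))\<^sup>2)
        = (LINT \<omega>|M. (cmod W / real (K * Mb))\<^sup>2 * (cmod (T \<omega>))\<^sup>2)"
      unfolding G by (rule Bochner_Integration.integral_cong) (simp_all add: norm_mult norm_divide power_mult_distrib power_divide)
    also have "\<dots> = (cmod W / real (K * Mb))\<^sup>2 * (real K * (real K * c + 1 - c))"
      by (simp add: ET2)
    also have "\<dots> = (cmod W / real Mb)\<^sup>2 * (1 / real K + (1 - 1 / real K) * c)"
      using K1 Mb1 by (simp add: field_simps power2_eq_square)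
    finally show ?thesis using AF C0 unfolding c_def by simp
  qed
  show ?thesis unfolding phi rho using part1 part2 by simp
qed
end
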